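(* Let $G^1=\langle V^1,s^1_1,s^1_2,\mathsf{null}^1,\mathsf{root}^1\rangle$ and $G^2=\langle V^2,s^2_1,s^2_2,\mathsf{null}^2,\mathsf{root}^2\rangle$ be graphs and let $G^1\times G^2$ be their Cartesian product. Then for every graph $G$: $G\to G^1\times G^2$ if and only if $G\to G^1$ and $G\to G^2$.
   Context: A graph is a tuple $\langle V,s_1,s_2,\mathsf{null},\mathsf{root}\rangle$ with $V$ finite, $\mathsf{root}\neq\mathsf{null}$ in $V$, $s_1,s_2\subseteq V\times V$, and $\langle\mathsf{null},x\rangle\in s_i$ iff $x=\mathsf{null}$. A homomorphism $h:G\to G'$ is a map on nodes with $\langle x,y\rangle\in s_i\Rightarrow\langle h(x),h(y)\rangle\in s_i'$, $h(x)=\mathsf{root}'$ iff $x=\mathsf{root}$, $h(x)=\mathsf{null}'$ iff $x=\mathsf{null}$; $G\to G'$ means one exists. The Cartesian product $G^0=G^1\times G^2=\langle V^0,s^0_1,s^0_2,\mathsf{null}^0,\mathsf{root}^0\rangle$ has $\mathsf{null}^0=\langle\mathsf{null}^1,\mathsf{null}^2\rangle$, $\mathsf{root}^0=\langle\mathsf{root}^1,\mathsf{root}^2\rangle$, $V^0=\{\mathsf{null}^0,\mathsf{root}^0\}\cup(V^1\setminus\{\mathsf{null}^1,\mathsf{root}^1\})\times(V^2\setminus\{\mathsf{null}^2,\mathsf{root}^2\})$, and for $i\in\{1,2\}$, $s^0_i=\{\langle\langle x^1,x^2\rangle,\langle y^1,y^2\rangle\rangle : \langle x^1,x^2\rangle,\langle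 y^1,y^2\rangle\in V^0,\ \langle x^1,y^1\rangle\in s^1_i,\ \langle x^2,y^2\rangle\in s^2_i\}$. *)

theory Defs
  imports Main
begin

record 'a graph =
  verts :: "'a set"
  succ1 :: "('a \<times> 'a) set"
  succ2 :: "('a \<times> 'a) set"
  gnull :: 'a
  groot :: 'a

definition is_graph :: "'a graph \<Rightarrow> bool" where
  "is_graph G \<longleftrightarrow>
     finite (verts G) \<and> groot G \<in> verts G \<and> gnull G \<in> verts G \<and>
     groot G \<noteq> gnull G \<and>
     succ1 G \<subseteq> verts G \<times> verts G \<and> succ2 G \<subseteq> verts G \<times> verts G \<and>
     (\<forall>x. (gnull G, x) \<in> succ1 G \<longleftrightarrow> x = gnull G) \<and>
     (\<forall>x. (gnull G, x) \<in> succ2 G \<longleftrightarrow> x = gnull G)"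

definition is_hom :: "'a graph \<Rightarrow> ('a \<Rightarrow> 'b) \<Rightarrow> 'b graph \<Rightarrow> bool" where
  "is_hom G h G' \<longleftrightarrow>
     (\<forall>x\<in>verts G. h x \<in> verts G') \<and>
     (\<forall>x y. (x, y) \<in> succ1 G \<longrightarrow> (h x, h y) \<in> succ1 G') \<and>
     (\<forall>x y. (x, y) \<in> succ2 G \<longrightarrow> (h x, h y) \<in> succ2 G') \<and>
     (\<forall>x\<in>verts G. h x = groot G' \<longleftrightarrow> x = groot G) \<and>
     (\<forall>x\<in>verts G. h x = gnull G' \<longleftrightarrow> x = gnull G)"

definition hom_exists :: "'a graph \<Rightarrow> 'b graph \<Rightarrow> bool" (infix "\<rightarrow>\<^sub>G" 50) where
  "G \<rightarrow>\<^sub>G G' \<longleftrightarrow> (\<exists>h. is_hom G h G')"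

definition graph_prod :: "'a graph \<Rightarrow> 'b graph \<Rightarrow> ('a \<times> 'b) graph" where
  "graph_prod G1 G2 =
    (let V0 = {(gnull G1, gnull G2), (groot G1, groot G2)} \<union>
              ((verts G1 - {gnull G1, groot G1}) \<times> (verts G2 - {gnull G2, groot G2}))
     in \<lparr> verts = V0,
          succ1 = {((x1, x2), (y1, y2)). (x1, x2) \<in> V0 \<and> (y1, y2) \<in> V0 \<and>
                     (x1, y1) \<in> succ1 G1 \<and> (x2, y2) \<in> succ1 G2},
          succ2 = {((x1, x2), (y1, y2)). (x1, x2) \<in> V0 \<and> (y1, y2) \<in> V0 \<and>
                     (x1, y1) \<in> succ2 G1 \<and> (x2, y2) \<in> succ2 G2},
          gnull = (gnull G1, gnull G2),
          groot = (groot G1, groot G2) \<rparr>)"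

end

theory Submission
  imports Defs
begin

lemma prod_simps:
  "verts (graph_prod G1 G2) = {(gnull G1, gnull G2), (groot G1, groot G2)} \<union>
              ((verts G1 - {gnull G1, groot G1}) \<times> (verts G2 - {gnull G2, groot G2}))"
  "gnull (graph_prod G1 G2) = (gnull G1, gnull G2)"
  "groot (graph_prod G1 G2) = (groot G1, groot G2)"
  "((x1,x2),(y1,y2)) \<in> succ1 (graph_prod G1 G2) \<longleftrightarrow>
     (x1,x2) \<in> verts (graph_prod G1 G2) \<and> (y1,y2) \<in> verts (graph_prod G1 G2) \<and>
     (x1, y1) \<in> succ1 G1 \<and> (x2, y2) \<in> succ1 G2"
  "((x1,x2),(y1,y2)) \<in> succ2 (graph_prod G1 G2) \<longleftrightarrow>
     (x1,x2) \<in> verts (graph_prod G1 G2) \<and> (y1,y2) \<in> verts (graph_prod G1 G2) \<and>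
     (x1, y1) \<in> succ2 G1 \<and> (x2, y2) \<in> succ2 G2"
  by (simp_all add: graph_prod_def Let_def)

lemma fst_hom:
  assumes h: "is_hom G h (graph_prod G1 G2)" and g1: "is_graph G1"
  shows "is_hom G (fst \<circ> h) G1"
  unfolding is_hom_def
proof (intro conjI allI impI ballI)
  fix x assume x: "x \<in> verts G"
  then have hx: "h x \<in> verts (graph_prod G1 G2)" using h by (simp add: is_hom_def)
  then show "(fst \<circ> h) x \<in> verts G1" using g1 by (auto simp: prod_simps is_graph_def)
  have r: "h x = groot (graph_prod G1 G2) \<longleftrightarrow> x = groot G" using h x by (simp add: is_hom_def)
  have n: "h x = gnull (graph_prod G1 G2) \<longleftrightarrow> x = gnull G" using h x by (simp add: is_hom_def)
  show "((fst \<circ> h) x = groot G1) = (x = groot G)"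
    using hx r g1 by (cases "h x") (auto simp: prod_simps is_graph_def)
  show "((fst \<circ> h) x = gnull G1) = (x = gnull G)"
    using hx n g1 by (cases "h x") (auto simp: prod_simps is_graph_def)
next
  fix x y assume "(x, y) \<in> succ1 G"
  then have "(h x, h y) \<in> succ1 (graph_prod G1 G2)" using h by (simp add: is_hom_def)
  then show "((fst \<circ> h) x, (fst \<circ> h) y) \<in> succ1 G1"
    by (cases "h x"; cases "h y") (simp add: prod_simps)
next
  fix x y assume "(x, y) \<in> succ2 G"
  then have "(h x, h y) \<in> succ2 (graph_prod G1 G2)" using h by (simp add: is_hom_def)
  then show "((fst \<circ> h) x, (fst \<circ> h) y) \<in> succ2 G1"
    by (cases "h x"; cases "h y") (simp add: prod_simps)
qed

lemma snd_hom:
  assumes h: "is_hom G h (graph_prod G1 G2)" and g2: "is_graph G2"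
  shows "is_hom G (snd \<circ> h) G2"
  unfolding is_hom_def
proof (intro conjI allI impI ballI)
  fix x assume x: "x \<in> verts G"
  then have hx: "h x \<in> verts (graph_prod G1 G2)" using h by (simp add: is_hom_def)
  then show "(snd \<circ> h) x \<in> verts G2" using g2 by (auto simp: prod_simps is_graph_def)
  have r: "h x = groot (graph_prod G1 G2) \<longleftrightarrow> x = groot G" using h x by (simp add: is_hom_def)
  have n: "h x = gnull (graph_prod G1 G2) \<longleftrightarrow> x = gnull G" using h x by (simp add: is_hom_def)
  show "((snd \<circ> h) x = groot G2) = (x = groot G)"
    using hx r g2 by (cases "h x") (auto simp: prod_simps is_graph_def)
  show "((snd \<circ> h) x = gnull G2) = (x = gnull G)"
    using hx n g2 by (cases "h x") (auto simp: prod_simps is_graph_def)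
next
  fix x y assume "(x, y) \<in> succ1 G"
  then have "(h x, h y) \<in> succ1 (graph_prod G1 G2)" using h by (simp add: is_hom_def)
  then show "((snd \<circ> h) x, (snd \<circ> h) y) \<in> succ1 G2"
    by (cases "h x"; cases "h y") (simp add: prod_simps)
next
  fix x y assume "(x, y) \<in> succ2 G"
  then have "(h x, h y) \<in> succ2 (graph_prod G1 G2)" using h by (simp add: is_hom_def)
  then show "((snd \<circ> h) x, (snd \<circ> h) y) \<in> succ2 G2"
    by (cases "h x"; cases "h y") (simp add: prod_simps)
qed

lemma pair_hom:
  assumes h1: "is_hom G h1 G1" and h2: "is_hom G h2 G2" and g: "is_graph G"
  shows "is_hom G (\<lambda>x. (h1 x, h2 x)) (graph_prod G1 G2)"
proof -
  have V: "(h1 x, h2 x) \<in> verts (graph_prod G1 G2)" if x: "x \<in> verts G" for x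
  proof -
    have a: "h1 x \<in> verts G1" "h2 x \<in> verts G2" using h1 h2 x by (auto simp: is_hom_def)
    have r1: "h1 x = groot G1 \<longleftrightarrow> x = groot G" and n1: "h1 x = gnull G1 \<longleftrightarrow> x = gnull G"
      using h1 x by (auto simp: is_hom_def)
    have r2: "h2 x = groot G2 \<longleftrightarrow> x = groot G" and n2: "h2 x = gnull G2 \<longleftrightarrow> x = gnull G"
      using h2 x by (auto simp: is_hom_def)
    show ?thesis using a r1 n1 r2 n2 by (auto simp: prod_simps)
  qed
  have E1: "succ1 G \<subseteq> verts G \<times> verts G" and E2: "succ2 G \<subseteq> verts G \<times> verts G"
    using g by (auto simp: is_graph_def)
  show ?thesis
    unfolding is_hom_def
  proof (intro conjI allI impI ballI)
    fix x assume "x \<in> verts G" then show "(h1 x, h2 x) \<in> verts (graph_prod G1 G2)" by (rule V)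
  next
    fix x assume x: "x \<in> verts G"
    show "((h1 x, h2 x) = groot (graph_prod G1 G2)) = (x = groot G)"
      using h1 h2 x by (auto simp: is_hom_def prod_simps)
    show "((h1 x, h2 x) = gnull (graph_prod G1 G2)) = (x = gnull G)"
      using h1 h2 x by (auto simp: is_hom_def prod_simps)
  next
    fix x y assume e: "(x, y) \<in> succ1 G"
    then have "x \<in> verts G" "y \<in> verts G" using E1 by auto
    then have "(h1 x, h2 x) \<in> verts (graph_prod G1 G2)" "(h1 y, h2 y) \<in> verts (graph_prod G1 G2)"
      using V by auto
    moreover have "(h1 x, h1 y) \<in> succ1 G1" "(h2 x, h2 y) \<in> succ1 G2" using e h1 h2 by (auto simp: is_hom_def)
    ultimately show "((h1 x, h2 x), (h1 y, h2 y)) \<in> succ1 (graph_prod G1 G2)"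
      by (simp only: prod_simps(4))
  next
    fix x y assume e: "(x, y) \<in> succ2 G"
    then have "x \<in> verts G" "y \<in> verts G" using E2 by auto
    then have "(h1 x, h2 x) \<in> verts (graph_prod G1 G2)" "(h1 y, h2 y) \<in> verts (graph_prod G1 G2)"
      using V by auto
    moreover have "(h1 x, h1 y) \<in> succ2 G1" "(h2 x, h2 y) \<in> succ2 G2" using e h1 h2 by (auto simp: is_hom_def)
    ultimately show "((h1 x, h2 x), (h1 y, h2 y)) \<in> succ2 (graph_prod G1 G2)"
      by (simp only: prod_simps(5))
  qed
qed

theorem proposition25:
  fixes G1 :: "'a graph" and G2 :: "'b graph" and G :: "'c graph"
  assumes "is_graph G1" and "is_graph G2" and "is_graph G"
  shows "G \<rightarrow>\<^sub>G graph_prod G1 G2 \<longleftrightarrow> (G \<rightarrow>\<^sub>G G1 \<and> G \<rightarrow>\<^sub>G G2)"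
  using fst_hom[OF _ assms(1)] snd_hom[OF _ assms(2)] pair_hom[OF _ _ assms(3)]
  unfolding hom_exists_def by blast

end
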